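(* Let $c_1,c_2>0$, $x_T>0$, $\tau>0$, $\theta,\eta_1,\eta_2\in\mathbb{R}$, and set $\lambda=c_1+c_2$ and $f(y)=c_2(x_T-y)-c_1y$. Assume $1+\eta_1\lambda(1-\theta)\tau\neq0$ and $1+\eta_2\lambda\theta\tau\neq0$, and define $$Q_1=\frac{1-(1-\eta_1)\lambda(1-\theta)\tau}{1+\eta_1\lambda(1-\theta)\tau},\qquad Q_2=\frac{1-(1-\eta_2)\lambda\theta\tau}{1+\eta_2\lambda\theta\tau},$$ with $Q_2\neq 0$. Consider the split-step tau-leaping iteration $$\hat Y_n=Y_n+(1-\theta)\tau\big((1-\eta_1)f(Y_n)+\eta_1 f(\hat Y_n)\big),$$ $$\tilde Y_n=\hat Y_n+P^{(2)}_n-P^{(1)}_n-\tau f(\hat Y_n),$$ $$Y_{n+1}=\tilde Y_n+\theta\tau\big((1-\eta_2)f(\tilde Y_n)+\eta_2 f(Y_{n+1})\big),$$ where, conditionally on $Y_0,\dots,Y_n$, $P^{(1)}_n$ and $P^{(2)}_n$ are independent Poisson random variables with means $c_1\hat Y_n\tau$ and $c_2(x_T-\hat Y_n)\tau$ respectively. Assume $Y_0$ has finite second moment and the iteration is well defined (the Poisson means are almost surely nonnegative). If $|Q_1Q_2|<1$, then $$\lim_{n\to\infty}\mathbb{E}[Y_n]=\frac{c_2}{\lambda}x_T,\qquad \lim_{n\to\infty}\mathrm{Var}[Y_n]=\frac{2\lambda\tau}{Q_2^{-2}-Q_1^{2}}\cdot\frac{c_1c_2}{\lambda^2}x_T .$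$
   Context: This models the reversible isomerization $S_1\rightleftharpoons S_2$ with forward rate $c_1$ (propensity $c_1X_1$) and backward rate $c_2$ (propensity $c_2X_2$), total molecule number $X_1+X_2=x_T$ conserved; $Y_n$ approximates $X_1(t_n)$ with $t_{n+1}-t_n=\tau$. The quantities $\frac{c_2}{\lambda}x_T$ and $\frac{c_1c_2}{\lambda^2}x_T$ are the mean and variance of the exact stationary (binomial) distribution of $X_1$. The product $Q_1Q_2$ is called the propagation coefficient of the scheme. *)

theory Defs
  imports "HOL-Probability.Probability"
begin

text \<open>Poisson point probabilities with mean mu (mu >= 0); same formula as the
library's poisson_pmf, which however requires a strictly positive rate.
For mu = 0 this is the point mass at 0.\<close>
definition poisson_prob :: "real \<Rightarrow> nat \<Rightarrow> real" where
  "poisson_prob mu k = mu ^ k / fact k * exp (- mu)"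

end

theory Submission
  imports Defs
begin
lemma pexp_sums: "(\<lambda>k. x ^ k / fact k) sums exp (x::real)"
  using exp_converges[of x] by (simp add: divide_inverse mult.commute scaleR_conv_of_real)

lemma pexp1_sums: "(\<lambda>k. real k * (x ^ k / fact k)) sums (x * exp (x::real))"
proof -
  have "(\<lambda>k. x * (x ^ k / fact k)) sums (x * exp x)"
    by (rule sums_mult[OF pexp_sums])
  moreover have "(\<lambda>k. real (Suc k) * (x ^ Suc k / fact (Suc k))) = (\<lambda>k. x * (x ^ k / fact k))"
    by (rule ext) (simp add: field_simps del: of_nat_Suc)
  ultimately show ?thesis
    using sums_Suc_iff[of "\<lambda>k. real k * (x ^ k / fact k)" "x * exp x"] by simp
qed

lemma pexp2_sums: "(\<lambda>k. (real k)^2 * (x ^ k / fact k)) sums (x * (x * exp x + exp (x::real)))"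
proof -
  have "(\<lambda>k. x * (real k * (x ^ k / fact k) + x ^ k / fact k)) sums (x * (x * exp x + exp x))"
    by (rule sums_mult[OF sums_add[OF pexp1_sums pexp_sums]])
  moreover have "(\<lambda>k. (real (Suc k))^2 * (x ^ Suc k / fact (Suc k))) = (\<lambda>k. x * (real k * (x ^ k / fact k) + x ^ k / fact k))"
  proof (rule ext)
    fix k
    have f: "(fact (Suc k) :: real) = real (Suc k) * fact k" by simp
    have nz: "(fact k :: real) \<noteq> 0" by simp
    have "(real (Suc k))^2 * (x ^ Suc k / fact (Suc k)) = real (Suc k) * x * (x ^ k / fact k)"
      unfolding f using nz by (simp add: power2_eq_square field_simps del: of_nat_Suc)
    also have "\<dots> = x * (real k * (x ^ k / fact k) + x ^ k / fact k)"
      by (simp add: algebra_simps add_divide_distrib)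
    finally show "(real (Suc k))^2 * (x ^ Suc k / fact (Suc k)) = x * (real k * (x ^ k / fact k) + x ^ k / fact k)" .
  qed
  ultimately show ?thesis
    using sums_Suc_iff[of "\<lambda>k. (real k)^2 * (x ^ k / fact k)" "x * (x * exp x + exp x)"] by simp
qed

lemma pp0_sums: "(\<lambda>k. 1 * poisson_prob mu k) sums 1"
  using sums_mult2[OF pexp_sums[of mu], of "exp (-mu)"]
  by (simp add: poisson_prob_def exp_minus field_simps)

lemma pp1_sums: "(\<lambda>k. real k * poisson_prob mu k) sums mu"
  using sums_mult2[OF pexp1_sums[of mu], of "exp (-mu)"]
  by (simp add: poisson_prob_def exp_minus field_simps)

lemma pp2_sums: "(\<lambda>k. (real k)^2 * poisson_prob mu k) sums (mu + mu^2)"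
proof -
  have "(mu * (mu * exp mu + exp mu)) * exp (-mu) = mu + mu^2"
    by (simp add: exp_minus field_simps power2_eq_square)
  then show ?thesis
  using sums_mult2[OF pexp2_sums[of mu], of "exp (-mu)"]
  by (simp add: poisson_prob_def mult.assoc)
qed

lemma pp_nonneg: "0 \<le> mu \<Longrightarrow> 0 \<le> poisson_prob mu k"
  by (simp add: poisson_prob_def)

lemma pp_le1: assumes "0 \<le> mu" shows "poisson_prob mu k \<le> 1"
proof -
  have "summable (\<lambda>k. 1 * poisson_prob mu k)" using pp0_sums sums_summable by blast
  then have "(\<Sum>i\<in>{k}. 1 * poisson_prob mu i) \<le> (\<Sum>i. 1 * poisson_prob mu i)"
    by (intro sum_le_suminf) (auto simp: pp_nonneg assms)
  then show ?thesis using sums_unique[OF pp0_sums[of mu]] by simp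
qed

lemma cond_single:
  fixes M :: "'a measure" and Y m1 m2 :: "'a \<Rightarrow> real" and P1 P2 :: "'a \<Rightarrow> nat"
    and g :: "real \<Rightarrow> ennreal"
  assumes M: "prob_space M"
    and [measurable]: "Y \<in> borel_measurable M" "P1 \<in> measurable M (count_space UNIV)"
      "P2 \<in> measurable M (count_space UNIV)" "m1 \<in> borel_measurable M" "m2 \<in> borel_measurable M"
    and nn: "AE \<omega> in M. 0 \<le> m1 \<omega> \<and> 0 \<le> m2 \<omega>"
    and cond: "\<And>B k1 k2. B \<in> sets borel \<Longrightarrow>
      measure M {\<omega> \<in> space M. Y \<omega> \<in> B \<and> P1 \<omega> = k1 \<and> P2 \<omega> = k2}
      = (\<integral>\<omega>. indicator {\<omega> \<in> space M. Y \<omega> \<in> B} \<omega> * poisson_prob (m1 \<omega>) k1 * poisson_prob (m2 \<omega>) k2 \<partial>M)"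
    and g[measurable]: "g \<in> borel_measurable borel"
  shows "(\<integral>\<^sup>+\<omega>. g (Y \<omega>) * indicator {\<omega> \<in> space M. P1 \<omega> = k1 \<and> P2 \<omega> = k2} \<omega> \<partial>M)
       = (\<integral>\<^sup>+\<omega>. g (Y \<omega>) * ennreal (poisson_prob (m1 \<omega>) k1 * poisson_prob (m2 \<omega>) k2) \<partial>M)"
proof -
  interpret prob_space M by (rule M)
  define S where "S = {\<omega> \<in> space M. P1 \<omega> = k1 \<and> P2 \<omega> = k2}"
  have S[measurable]: "S \<in> sets M" unfolding S_def by measurable
  define q where "q \<omega> = ennreal (poisson_prob (m1 \<omega>) k1 * poisson_prob (m2 \<omega>) k2)" for \<omega>
  have pm[measurable]: "(\<lambda>\<omega>. poisson_prob (m1 \<omega>) k) \<in> borel_measurable M"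
     "(\<lambda>\<omega>. poisson_prob (m2 \<omega>) k) \<in> borel_measurable M" for k
    unfolding poisson_prob_def by measurable
  have q[measurable]: "q \<in> borel_measurable M" unfolding q_def by measurable
  have eq: "distr (density M (indicator S)) borel Y = distr (density M q) borel Y"
  proof (rule measure_eqI)
    show "sets (distr (density M (indicator S)) borel Y) = sets (distr (density M q) borel Y)" by simp
    fix B assume "B \<in> sets (distr (density M (indicator S)) borel Y)"
    then have B[measurable]: "B \<in> sets borel" by simp
    have YB[measurable]: "Y -` B \<inter> space M \<in> sets M" by measurable
    have int: "integrable M (\<lambda>\<omega>. indicator {\<omega> \<in> space M. Y \<omega> \<in> B} \<omega> * poisson_prob (m1 \<omega>) k1 * poisson_prob (m2 \<omega>) k2)"
    proof (rule integrable_const_bound[where B=1])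
      show "AE x in M. norm (indicator {\<omega> \<in> space M. Y \<omega> \<in> B} x * poisson_prob (m1 x) k1 * poisson_prob (m2 x) k2) \<le> 1"
        using nn
      proof eventually_elim
        case (elim x)
        then show ?case using pp_le1[of "m1 x" k1] pp_le1[of "m2 x" k2] pp_nonneg[of "m1 x" k1] pp_nonneg[of "m2 x" k2]
          by (auto simp: indicator_def abs_mult intro: mult_le_one)
      qed
    qed measurable
    have "emeasure (distr (density M (indicator S)) borel Y) B = emeasure (density M (indicator S)) (Y -` B \<inter> space M)"
      by (subst emeasure_distr) auto
    also have "\<dots> = (\<integral>\<^sup>+ x. indicator S x * indicator (Y -` B \<inter> space M) x \<partial>M)"
      by (subst emeasure_density) auto
    also have "\<dots> = emeasure M {\<omega> \<in> space M. Y \<omega> \<in> B \<and> P1 \<omega> = k1 \<and> P2 \<omega> = k2}"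
    proof -
      have "(\<lambda>x. indicator S x * indicator (Y -` B \<inter> space M) x :: ennreal) = indicator {\<omega> \<in> space M. Y \<omega> \<in> B \<and> P1 \<omega> = k1 \<and> P2 \<omega> = k2}"
        by (auto simp: S_def indicator_def)
      moreover have "{\<omega> \<in> space M. Y \<omega> \<in> B \<and> P1 \<omega> = k1 \<and> P2 \<omega> = k2} \<in> sets M" by measurable
      ultimately show ?thesis by simp
    qed
    also have "\<dots> = ennreal (measure M {\<omega> \<in> space M. Y \<omega> \<in> B \<and> P1 \<omega> = k1 \<and> P2 \<omega> = k2})"
      by (simp add: emeasure_eq_measure)
    also have "\<dots> = ennreal (\<integral>\<omega>. indicator {\<omega> \<in> space M. Y \<omega> \<in> B} \<omega> * poisson_prob (m1 \<omega>) k1 * poisson_prob (m2 \<omega>) k2 \<partial>M)"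
      using cond[OF B] by simp
    also have "\<dots> = (\<integral>\<^sup>+\<omega>. ennreal (indicator {\<omega> \<in> space M. Y \<omega> \<in> B} \<omega> * poisson_prob (m1 \<omega>) k1 * poisson_prob (m2 \<omega>) k2) \<partial>M)"
    proof (rule nn_integral_eq_integral[symmetric, OF int])
      show "AE x in M. 0 \<le> indicator {\<omega> \<in> space M. Y \<omega> \<in> B} x * poisson_prob (m1 x) k1 * poisson_prob (m2 x) k2"
        using nn by eventually_elim (auto simp: pp_nonneg)
    qed
    also have "\<dots> = (\<integral>\<^sup>+ x. q x * indicator (Y -` B \<inter> space M) x \<partial>M)"
      by (rule nn_integral_cong) (auto simp: q_def indicator_def)
    also have "\<dots> = emeasure (density M q) (Y -` B \<inter> space M)"
      by (subst emeasure_density) auto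
    also have "\<dots> = emeasure (distr (density M q) borel Y) B"
      by (subst emeasure_distr) auto
    finally show "emeasure (distr (density M (indicator S)) borel Y) B = emeasure (distr (density M q) borel Y) B" .
  qed
  have "(\<integral>\<^sup>+\<omega>. g (Y \<omega>) * indicator S \<omega> \<partial>M) = integral\<^sup>N (distr (density M (indicator S)) borel Y) g"
    by (subst nn_integral_distr) (auto simp: nn_integral_density mult.commute)
  also have "\<dots> = integral\<^sup>N (distr (density M q) borel Y) g" by (simp add: eq)
  also have "\<dots> = (\<integral>\<^sup>+\<omega>. g (Y \<omega>) * q \<omega> \<partial>M)"
    by (subst nn_integral_distr) (auto simp: nn_integral_density mult.commute)
  finally show ?thesis by (simp add: S_def q_def)
qed

lemma suminf_single_ennreal: "(\<Sum>n. f n * indicator {n} (i::nat)) = (f i :: ennreal)"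
  by (rule suminf_cmult_indicator) (auto simp: disjoint_family_on_def)

lemma cond_prod:
  fixes M :: "'a measure" and Y m1 m2 :: "'a \<Rightarrow> real" and P1 P2 :: "'a \<Rightarrow> nat"
    and g :: "real \<Rightarrow> ennreal" and a b :: "nat \<Rightarrow> real"
  assumes M: "prob_space M"
    and [measurable]: "Y \<in> borel_measurable M" "P1 \<in> measurable M (count_space UNIV)"
      "P2 \<in> measurable M (count_space UNIV)" "m1 \<in> borel_measurable M" "m2 \<in> borel_measurable M"
    and nn: "AE \<omega> in M. 0 \<le> m1 \<omega> \<and> 0 \<le> m2 \<omega>"
    and cond: "\<And>B k1 k2. B \<in> sets borel \<Longrightarrow>
      measure M {\<omega> \<in> space M. Y \<omega> \<in> B \<and> P1 \<omega> = k1 \<and> P2 \<omega> = k2}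
      = (\<integral>\<omega>. indicator {\<omega> \<in> space M. Y \<omega> \<in> B} \<omega> * poisson_prob (m1 \<omega>) k1 * poisson_prob (m2 \<omega>) k2 \<partial>M)"
    and g[measurable]: "g \<in> borel_measurable borel"
    and a: "\<And>k. 0 \<le> a k" and b: "\<And>k. 0 \<le> b k"
  shows "(\<integral>\<^sup>+\<omega>. g (Y \<omega>) * ennreal (a (P1 \<omega>)) * ennreal (b (P2 \<omega>)) \<partial>M)
       = (\<integral>\<^sup>+\<omega>. g (Y \<omega>) * (\<Sum>k. ennreal (a k * poisson_prob (m1 \<omega>) k))
                          * (\<Sum>k. ennreal (b k * poisson_prob (m2 \<omega>) k)) \<partial>M)"
proof -
  define S where "S k1 k2 = {\<omega> \<in> space M. P1 \<omega> = k1 \<and> P2 \<omega> = k2}" for k1 k2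
  have S[measurable]: "S k1 k2 \<in> sets M" for k1 k2 unfolding S_def by measurable
  have pm[measurable]: "(\<lambda>\<omega>. poisson_prob (m1 \<omega>) k) \<in> borel_measurable M"
     "(\<lambda>\<omega>. poisson_prob (m2 \<omega>) k) \<in> borel_measurable M" for k
    unfolding poisson_prob_def by measurable
  define F where "F k1 k2 = ennreal (a k1) * ennreal (b k2)" for k1 k2
  have pw: "g (Y \<omega>) * ennreal (a (P1 \<omega>)) * ennreal (b (P2 \<omega>))
      = (\<Sum>k1. \<Sum>k2. F k1 k2 * (g (Y \<omega>) * indicator (S k1 k2) \<omega>))" if "\<omega> \<in> space M" for \<omega>
  proof -
    have "(\<Sum>k2. F k1 k2 * (g (Y \<omega>) * indicator (S k1 k2) \<omega>))
        = (g (Y \<omega>) * F k1 (P2 \<omega>)) * indicator {k1} (P1 \<omega>)" for k1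
    proof -
      have "(\<lambda>k2. F k1 k2 * (g (Y \<omega>) * indicator (S k1 k2) \<omega>))
          = (\<lambda>k2. (g (Y \<omega>) * F k1 k2 * indicator {k1} (P1 \<omega>)) * indicator {k2} (P2 \<omega>))"
        using that by (auto simp: S_def indicator_def fun_eq_iff mult_ac)
      then show ?thesis using suminf_single_ennreal[of "\<lambda>k2. g (Y \<omega>) * F k1 k2 * indicator {k1} (P1 \<omega>)" "P2 \<omega>"]
        by simp
    qed
    then have "(\<Sum>k1. \<Sum>k2. F k1 k2 * (g (Y \<omega>) * indicator (S k1 k2) \<omega>))
       = (\<Sum>k1. (g (Y \<omega>) * F k1 (P2 \<omega>)) * indicator {k1} (P1 \<omega>))" by simp
    also have "\<dots> = g (Y \<omega>) * F (P1 \<omega>) (P2 \<omega>)" by (rule suminf_single_ennreal)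
    finally show ?thesis by (simp add: F_def mult_ac)
  qed
  have "(\<integral>\<^sup>+\<omega>. g (Y \<omega>) * ennreal (a (P1 \<omega>)) * ennreal (b (P2 \<omega>)) \<partial>M)
      = (\<integral>\<^sup>+\<omega>. (\<Sum>k1. \<Sum>k2. F k1 k2 * (g (Y \<omega>) * indicator (S k1 k2) \<omega>)) \<partial>M)"
    by (rule nn_integral_cong) (simp add: pw)
  also have "\<dots> = (\<Sum>k1. \<Sum>k2. F k1 k2 * (\<integral>\<^sup>+\<omega>. g (Y \<omega>) * indicator (S k1 k2) \<omega> \<partial>M))"
    by (simp add: nn_integral_suminf nn_integral_cmult)
  also have "\<dots> = (\<Sum>k1. \<Sum>k2. F k1 k2 * (\<integral>\<^sup>+\<omega>. g (Y \<omega>) * ennreal (poisson_prob (m1 \<omega>) k1 * poisson_prob (m2 \<omega>) k2) \<partial>M))"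
    unfolding S_def by (simp add: cond_single[OF M _ _ _ _ _ nn cond g])
  also have "\<dots> = (\<integral>\<^sup>+\<omega>. (\<Sum>k1. \<Sum>k2. F k1 k2 * (g (Y \<omega>) * ennreal (poisson_prob (m1 \<omega>) k1 * poisson_prob (m2 \<omega>) k2))) \<partial>M)"
    by (simp add: nn_integral_suminf nn_integral_cmult)
  also have "\<dots> = (\<integral>\<^sup>+\<omega>. g (Y \<omega>) * (\<Sum>k. ennreal (a k * poisson_prob (m1 \<omega>) k))
                          * (\<Sum>k. ennreal (b k * poisson_prob (m2 \<omega>) k)) \<partial>M)"
  proof (rule nn_integral_cong_AE)
    show "AE \<omega> in M. (\<Sum>k1. \<Sum>k2. F k1 k2 * (g (Y \<omega>) * ennreal (poisson_prob (m1 \<omega>) k1 * poisson_prob (m2 \<omega>) k2)))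
       = g (Y \<omega>) * (\<Sum>k. ennreal (a k * poisson_prob (m1 \<omega>) k)) * (\<Sum>k. ennreal (b k * poisson_prob (m2 \<omega>) k))"
      using nn
    proof eventually_elim
      case (elim \<omega>)
      have "F k1 k2 * (g (Y \<omega>) * ennreal (poisson_prob (m1 \<omega>) k1 * poisson_prob (m2 \<omega>) k2))
         = g (Y \<omega>) * (ennreal (a k1 * poisson_prob (m1 \<omega>) k1) * ennreal (b k2 * poisson_prob (m2 \<omega>) k2))" for k1 k2
        using elim a[of k1] b[of k2] pp_nonneg[of "m1 \<omega>" k1] pp_nonneg[of "m2 \<omega>" k2]
        by (simp add: F_def ennreal_mult mult_ac)
      then show ?case by (simp add: ennreal_suminf_cmult ennreal_suminf_multc mult_ac)
    qed
  qed
  finally show ?thesis .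
qed

lemma cond_real:
  fixes M :: "'a measure" and Y ma mb :: "'a \<Rightarrow> real" and Pa Pb :: "'a \<Rightarrow> nat"
    and gr :: "real \<Rightarrow> real" and a b :: "nat \<Rightarrow> real" and A B :: "real \<Rightarrow> real"
  assumes M: "prob_space M"
    and [measurable]: "Y \<in> borel_measurable M" "Pa \<in> measurable M (count_space UNIV)"
      "Pb \<in> measurable M (count_space UNIV)" "ma \<in> borel_measurable M" "mb \<in> borel_measurable M"
    and nn: "AE \<omega> in M. 0 \<le> ma \<omega> \<and> 0 \<le> mb \<omega>"
    and cond: "\<And>B k1 k2. B \<in> sets borel \<Longrightarrow>
      measure M {\<omega> \<in> space M. Y \<omega> \<in> B \<and> Pa \<omega> = k1 \<and> Pb \<omega> = k2}
      = (\<integral>\<omega>. indicator {\<omega> \<in> space M. Y \<omega> \<in> B} \<omega> * poisson_prob (ma \<omega>) k1 * poisson_prob (mb \<omega>) k2 \<partial>M)"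
    and gr[measurable]: "gr \<in> borel_measurable borel"
    and grnn: "AE \<omega> in M. 0 \<le> gr (Y \<omega>)"
    and a: "\<And>k. 0 \<le> a k" and b: "\<And>k. 0 \<le> b k"
    and As: "\<And>mu. 0 \<le> mu \<Longrightarrow> (\<lambda>k. a k * poisson_prob mu k) sums A mu"
    and Bs: "\<And>mu. 0 \<le> mu \<Longrightarrow> (\<lambda>k. b k * poisson_prob mu k) sums B mu"
    and Am[measurable]: "A \<in> borel_measurable borel" and Bm[measurable]: "B \<in> borel_measurable borel"
    and int: "integrable M (\<lambda>\<omega>. gr (Y \<omega>) * A (ma \<omega>) * B (mb \<omega>))"
  shows "integrable M (\<lambda>\<omega>. gr (Y \<omega>) * a (Pa \<omega>) * b (Pb \<omega>))"
    and "(\<integral>\<omega>. gr (Y \<omega>) * a (Pa \<omega>) * b (Pb \<omega>) \<partial>M) = (\<integral>\<omega>. gr (Y \<omega>) * A (ma \<omega>) * B (mb \<omega>) \<partial>M)"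
proof -
  have A0: "0 \<le> A mu" if "0 \<le> mu" for mu
    using sums_le[of "\<lambda>k. 0" "\<lambda>k. a k * poisson_prob mu k" 0 "A mu"] As[OF that] a pp_nonneg[OF that]
    by auto
  have B0: "0 \<le> B mu" if "0 \<le> mu" for mu
    using sums_le[of "\<lambda>k. 0" "\<lambda>k. b k * poisson_prob mu k" 0 "B mu"] Bs[OF that] b pp_nonneg[OF that]
    by auto
  have sA: "(\<Sum>k. ennreal (a k * poisson_prob mu k)) = ennreal (A mu)" if "0 \<le> mu" for mu
  proof -
    have "0 \<le> a k * poisson_prob mu k" for k using a[of k] pp_nonneg[OF that] by simp
    from suminf_ennreal2[of "\<lambda>k. a k * poisson_prob mu k", OF this sums_summable[OF As[OF that]]]
    show ?thesis using sums_unique[OF As[OF that]] by simp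
  qed
  have sB: "(\<Sum>k. ennreal (b k * poisson_prob mu k)) = ennreal (B mu)" if "0 \<le> mu" for mu
  proof -
    have "0 \<le> b k * poisson_prob mu k" for k using b[of k] pp_nonneg[OF that] by simp
    from suminf_ennreal2[of "\<lambda>k. b k * poisson_prob mu k", OF this sums_summable[OF Bs[OF that]]]
    show ?thesis using sums_unique[OF Bs[OF that]] by simp
  qed
  have gm: "(\<lambda>y. ennreal (gr y)) \<in> borel_measurable borel" by measurable
  have "(\<integral>\<^sup>+\<omega>. ennreal (gr (Y \<omega>) * a (Pa \<omega>) * b (Pb \<omega>)) \<partial>M)
      = (\<integral>\<^sup>+\<omega>. ennreal (gr (Y \<omega>)) * ennreal (a (Pa \<omega>)) * ennreal (b (Pb \<omega>)) \<partial>M)"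
    using grnn by (intro nn_integral_cong_AE) (auto simp: ennreal_mult a b)
  also have "\<dots> = (\<integral>\<^sup>+\<omega>. ennreal (gr (Y \<omega>)) * (\<Sum>k. ennreal (a k * poisson_prob (ma \<omega>) k))
                          * (\<Sum>k. ennreal (b k * poisson_prob (mb \<omega>) k)) \<partial>M)"
    by (rule cond_prod[OF M _ _ _ _ _ nn cond gm a b]) auto
  also have "\<dots> = (\<integral>\<^sup>+\<omega>. ennreal (gr (Y \<omega>) * A (ma \<omega>) * B (mb \<omega>)) \<partial>M)"
    using nn grnn by (intro nn_integral_cong_AE) (auto simp: sA sB ennreal_mult A0 B0)
  also have "\<dots> = ennreal (\<integral>\<omega>. gr (Y \<omega>) * A (ma \<omega>) * B (mb \<omega>) \<partial>M)"
    using nn grnn by (intro nn_integral_eq_integral int) (auto simp: A0 B0)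
  finally have eq: "(\<integral>\<^sup>+\<omega>. ennreal (gr (Y \<omega>) * a (Pa \<omega>) * b (Pb \<omega>)) \<partial>M) = ennreal (\<integral>\<omega>. gr (Y \<omega>) * A (ma \<omega>) * B (mb \<omega>) \<partial>M)" .
  have nnL: "AE \<omega> in M. 0 \<le> gr (Y \<omega>) * a (Pa \<omega>) * b (Pb \<omega>)"
    using grnn by eventually_elim (auto simp: a b)
  show int2: "integrable M (\<lambda>\<omega>. gr (Y \<omega>) * a (Pa \<omega>) * b (Pb \<omega>))"
    by (rule integrableI_nn_integral_finite[OF _ nnL eq]) measurable
  have "ennreal (\<integral>\<omega>. gr (Y \<omega>) * a (Pa \<omega>) * b (Pb \<omega>) \<partial>M) = ennreal (\<integral>\<omega>. gr (Y \<omega>) * A (ma \<omega>) * B (mb \<omega>) \<partial>M)"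
    using nn_integral_eq_integral[OF int2 nnL] eq by simp
  moreover have "0 \<le> (\<integral>\<omega>. gr (Y \<omega>) * a (Pa \<omega>) * b (Pb \<omega>) \<partial>M)" using nnL by (rule integral_nonneg_AE)
  moreover have "0 \<le> (\<integral>\<omega>. gr (Y \<omega>) * A (ma \<omega>) * B (mb \<omega>) \<partial>M)"
    using nn grnn by (intro integral_nonneg_AE) (auto simp: A0 B0)
  ultimately show "(\<integral>\<omega>. gr (Y \<omega>) * a (Pa \<omega>) * b (Pb \<omega>) \<partial>M) = (\<integral>\<omega>. gr (Y \<omega>) * A (ma \<omega>) * B (mb \<omega>) \<partial>M)"
    by simp
qed

lemma lin_rec_zero:
  fixes y e :: "nat \<Rightarrow> real"
  assumes r: "\<bar>r\<bar> < 1" and rec: "\<And>n. y (Suc n) = r * y n + e n" and e: "e \<longlonglongrightarrow> 0"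
  shows "y \<longlonglongrightarrow> 0"
proof (rule LIMSEQ_I)
  fix \<epsilon> :: real assume "0 < \<epsilon>"
  define \<delta> where "\<delta> = \<epsilon> * (1 - \<bar>r\<bar>) / 2"
  have \<delta>: "0 < \<delta>" using \<open>0 < \<epsilon>\<close> r by (simp add: \<delta>_def)
  obtain N where N: "\<And>n. n \<ge> N \<Longrightarrow> norm (e n) < \<delta>"
    using LIMSEQ_D[OF e \<delta>] by auto
  have bnd: "\<bar>y (N + k)\<bar> \<le> \<bar>r\<bar> ^ k * \<bar>y N\<bar> + \<delta> / (1 - \<bar>r\<bar>)" for k
  proof (induction k)
    case 0 then show ?case using \<delta> r by simp
  next
    case (Suc k)
    have "\<bar>y (N + Suc k)\<bar> = \<bar>r * y (N + k) + e (N + k)\<bar>" by (simp add: rec)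
    also have "\<dots> \<le> \<bar>r\<bar> * \<bar>y (N + k)\<bar> + \<delta>"
      using N[of "N+k"] by (simp add: abs_mult abs_triangle_ineq order_trans[OF abs_triangle_ineq] add_mono)
    also have "\<dots> \<le> \<bar>r\<bar> * (\<bar>r\<bar> ^ k * \<bar>y N\<bar> + \<delta> / (1 - \<bar>r\<bar>)) + \<delta>"
      using Suc by (simp add: mult_left_mono)
    also have "\<dots> = \<bar>r\<bar> ^ Suc k * \<bar>y N\<bar> + \<delta> / (1 - \<bar>r\<bar>)"
      using r by (simp add: field_simps)
    finally show ?case .
  qed
  have "(\<lambda>k. \<bar>r\<bar> ^ k * \<bar>y N\<bar>) \<longlonglongrightarrow> 0 * \<bar>y N\<bar>"
    by (intro tendsto_mult tendsto_const LIMSEQ_power_zero) (use r in auto)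
  then have "(\<lambda>k. \<bar>r\<bar> ^ k * \<bar>y N\<bar>) \<longlonglongrightarrow> 0" by simp
  from LIMSEQ_D[OF this, of "\<epsilon>/2"] \<open>0 < \<epsilon>\<close>
  obtain K where K: "\<And>k. k \<ge> K \<Longrightarrow> norm (\<bar>r\<bar> ^ k * \<bar>y N\<bar> - 0) < \<epsilon> / 2"
    by auto
  have half: "\<delta> / (1 - \<bar>r\<bar>) = \<epsilon> / 2" using r by (simp add: \<delta>_def field_simps)
  show "\<exists>no. \<forall>n\<ge>no. norm (y n - 0) < \<epsilon>"
  proof (intro exI allI impI)
    fix n assume "n \<ge> N + K"
    then obtain k where k: "n = N + k" "k \<ge> K" by (metis add_le_imp_le_left le_add_diff_inverse le_add1 le_trans)
    have "\<bar>y n\<bar> \<le> \<bar>r\<bar> ^ k * \<bar>y N\<bar> + \<epsilon> / 2" using bnd[of k] k half by simp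
    also have "\<dots> < \<epsilon>" using K[OF k(2)] by simp
    finally show "norm (y n - 0) < \<epsilon>" by simp
  qed
qed

lemma lin_rec:
  fixes x b :: "nat \<Rightarrow> real"
  assumes r: "\<bar>r\<bar> < 1" and rec: "\<And>n. x (Suc n) = r * x n + b n" and b: "b \<longlonglongrightarrow> bl"
  shows "x \<longlonglongrightarrow> bl / (1 - r)"
proof -
  have r1: "1 - r \<noteq> 0" using r by auto
  have "(\<lambda>n. x n - bl / (1 - r)) \<longlonglongrightarrow> 0"
  proof (rule lin_rec_zero[OF r])
    show "x (Suc n) - bl / (1 - r) = r * (x n - bl / (1 - r)) + (b n - bl)" for n
      using r1 by (simp add: rec field_simps)
    show "(\<lambda>n. b n - bl) \<longlonglongrightarrow> 0" using b by (simp add: LIM_zero)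
  qed
  then show ?thesis by (simp add: LIM_zero_iff)
qed

lemma int_bdd_fun:
  fixes Z :: "'a \<Rightarrow> real" and h :: "real \<Rightarrow> real"
  assumes M: "prob_space M" and Zm[measurable]: "Z \<in> borel_measurable M"
    and Zb: "AE \<omega> in M. lo \<le> Z \<omega> \<and> Z \<omega> \<le> hi" and h: "continuous_on UNIV h"
  shows "integrable M (\<lambda>\<omega>. h (Z \<omega>))"
proof -
  interpret prob_space M by (rule M)
  have hm[measurable]: "h \<in> borel_measurable borel" by (rule borel_measurable_continuous_onI[OF h])
  have "compact (h ` {lo..hi})"
    by (rule compact_continuous_image[OF continuous_on_subset[OF h]]) auto
  then obtain B where B: "\<And>z. z \<in> {lo..hi} \<Longrightarrow> norm (h z) \<le> B"
    using compact_imp_bounded[of "h ` {lo..hi}"] unfolding bounded_iff by (metis atLeastAtMost_iff image_eqI real_norm_def)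
  show ?thesis
  proof (rule integrable_const_bound[where B=B])
    show "AE x in M. norm (h (Z x)) \<le> B" using Zb by eventually_elim (use B in auto)
  qed measurable
qed

lemma int_lin8:
  fixes f0 f1 f2 f3 f4 f5 f6 f7 :: "'a \<Rightarrow> real"
  assumes "integrable M f0" "integrable M f1" "integrable M f2" "integrable M f3"
    "integrable M f4" "integrable M f5" "integrable M f6" "integrable M f7"
  shows "(\<integral>\<omega>. f0 \<omega> + u1 * f1 \<omega> + v1 * f2 \<omega> + u2 * f3 \<omega> + v2 * f4 \<omega> + b1 * f5 \<omega> + b2 * f6 \<omega> + b3 * f7 \<omega> \<partial>M)
    = integral\<^sup>L M f0 + u1 * integral\<^sup>L M f1 + v1 * integral\<^sup>L M f2 + u2 * integral\<^sup>L M f3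
      + v2 * integral\<^sup>L M f4 + b1 * integral\<^sup>L M f5 + b2 * integral\<^sup>L M f6 + b3 * integral\<^sup>L M f7"
  using assms by simp

lemma combo:
  fixes M :: "'a measure" and Y :: "'a \<Rightarrow> real" and P1 P2 :: "'a \<Rightarrow> nat"
    and zf \<alpha>0 :: "real \<Rightarrow> real" and c1 c2 xT \<tau> u1 v1 u2 v2 b1 b2 b3 :: real
  assumes M: "prob_space M"
    and [measurable]: "Y \<in> borel_measurable M" "P1 \<in> measurable M (count_space UNIV)"
      "P2 \<in> measurable M (count_space UNIV)"
    and zf: "continuous_on UNIV zf" and \<alpha>0: "continuous_on UNIV \<alpha>0"
    and c1: "c1 > 0" and c2: "c2 > 0" and tau: "\<tau> > 0"
    and nn: "AE \<omega> in M. 0 \<le> c1 * zf (Y \<omega>) * \<tau> \<and> 0 \<le> c2 * (xT - zf (Y \<omega>)) * \<tau>"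
    and cond: "\<And>B k1 k2. B \<in> sets borel \<Longrightarrow>
      measure M {\<omega> \<in> space M. Y \<omega> \<in> B \<and> P1 \<omega> = k1 \<and> P2 \<omega> = k2}
      = (\<integral>\<omega>. indicator {\<omega> \<in> space M. Y \<omega> \<in> B} \<omega> * poisson_prob (c1 * zf (Y \<omega>) * \<tau>) k1
            * poisson_prob (c2 * (xT - zf (Y \<omega>)) * \<tau>) k2 \<partial>M)"
  defines "T \<equiv> \<lambda>\<omega>. \<alpha>0 (zf (Y \<omega>)) + u1 * real (P1 \<omega>) + v1 * (zf (Y \<omega>) * real (P1 \<omega>))
       + u2 * real (P2 \<omega>) + v2 * (zf (Y \<omega>) * real (P2 \<omega>))
       + b1 * (real (P1 \<omega>))^2 + b2 * (real (P2 \<omega>))^2 + b3 * (real (P1 \<omega>) * real (P2 \<omega>))"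
  defines "R \<equiv> \<lambda>z. \<alpha>0 z + u1 * (c1 * z * \<tau>) + v1 * (z * (c1 * z * \<tau>))
       + u2 * (c2 * (xT - z) * \<tau>) + v2 * (z * (c2 * (xT - z) * \<tau>))
       + b1 * (c1 * z * \<tau> + (c1 * z * \<tau>)^2) + b2 * (c2 * (xT - z) * \<tau> + (c2 * (xT - z) * \<tau>)^2)
       + b3 * ((c1 * z * \<tau>) * (c2 * (xT - z) * \<tau>))"
  shows "integrable M T" "integral\<^sup>L M T = (\<integral>\<omega>. R (zf (Y \<omega>)) \<partial>M)" "integrable M (\<lambda>\<omega>. R (zf (Y \<omega>)))"
proof -
  interpret prob_space M by (rule M)
  have zfm[measurable]: "zf \<in> borel_measurable borel" by (rule borel_measurable_continuous_onI[OF zf])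
  have m1m[measurable]: "(\<lambda>\<omega>. c1 * zf (Y \<omega>) * \<tau>) \<in> borel_measurable M" by measurable
  have m2m[measurable]: "(\<lambda>\<omega>. c2 * (xT - zf (Y \<omega>)) * \<tau>) \<in> borel_measurable M" by measurable
  have Zb: "AE \<omega> in M. 0 \<le> zf (Y \<omega>) \<and> zf (Y \<omega>) \<le> xT"
    using nn by eventually_elim (use c1 c2 tau in \<open>auto simp: zero_le_mult_iff\<close>)
  have nn1: "AE \<omega> in M. 0 \<le> c1 * zf (Y \<omega>) * \<tau>" using nn by eventually_elim auto
  have nn2: "AE \<omega> in M. 0 \<le> c2 * (xT - zf (Y \<omega>)) * \<tau>" using nn by eventually_elim auto
  have grnn1: "AE \<omega> in M. 0 \<le> (\<lambda>_. 1::real) (Y \<omega>)" by simp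
  have grnnz: "AE \<omega> in M. 0 \<le> zf (Y \<omega>)" using Zb by eventually_elim auto
  have ib: "integrable M (\<lambda>\<omega>. h (zf (Y \<omega>)))" if "continuous_on UNIV h" for h :: "real \<Rightarrow> real"
    using int_bdd_fun[where Z="\<lambda>\<omega>. zf (Y \<omega>)" and lo=0 and hi=xT, OF M _ _ that] Zb by simp
  have cr: "integrable M (\<lambda>\<omega>. gr (Y \<omega>) * a (P1 \<omega>) * b (P2 \<omega>)) \<and>
     (\<integral>\<omega>. gr (Y \<omega>) * a (P1 \<omega>) * b (P2 \<omega>) \<partial>M) = (\<integral>\<omega>. gr (Y \<omega>) * A (c1 * zf (Y \<omega>) * \<tau>) * B (c2 * (xT - zf (Y \<omega>)) * \<tau>) \<partial>M)"
    if h: "gr \<in> borel_measurable borel" "AE \<omega> in M. 0 \<le> gr (Y \<omega>)" "\<And>k. 0 \<le> a k" "\<And>k. 0 \<le> b k"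
      "\<And>mu. 0 \<le> mu \<Longrightarrow> (\<lambda>k. a k * poisson_prob mu k) sums A mu"
      "\<And>mu. 0 \<le> mu \<Longrightarrow> (\<lambda>k. b k * poisson_prob mu k) sums B mu"
      "A \<in> borel_measurable borel" "B \<in> borel_measurable borel"
      "integrable M (\<lambda>\<omega>. gr (Y \<omega>) * A (c1 * zf (Y \<omega>) * \<tau>) * B (c2 * (xT - zf (Y \<omega>)) * \<tau>))"
    for gr a b A B :: "_ \<Rightarrow> real"
    by (intro conjI cond_real[where M=M and Y=Y and Pa=P1 and Pb=P2 and ma="\<lambda>\<omega>. c1 * zf (Y \<omega>) * \<tau>"
          and mb="\<lambda>\<omega>. c2 * (xT - zf (Y \<omega>)) * \<tau>" and gr=gr and a=a and b=b and A=A and B=B])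
       (simp_all add: M nn cond h nn1 nn2)
  have s0: "\<And>mu. 0 \<le> mu \<Longrightarrow> (\<lambda>k. (\<lambda>_. 1::real) k * poisson_prob mu k) sums (\<lambda>_. 1) mu"
    using pp0_sums by simp
  have s1: "\<And>mu. 0 \<le> mu \<Longrightarrow> (\<lambda>k. real k * poisson_prob mu k) sums (\<lambda>x. x) mu"
    using pp1_sums by simp
  have s2: "\<And>mu. 0 \<le> mu \<Longrightarrow> (\<lambda>k. (\<lambda>k. (real k)^2) k * poisson_prob mu k) sums (\<lambda>x. x + x^2) mu"
    using pp2_sums by simp
  have g1m: "(\<lambda>_::real. 1::real) \<in> borel_measurable borel" by simp
  have c1m: "(\<lambda>_::real. 1::real) \<in> borel_measurable borel" by simp
  have idm: "(\<lambda>x::real. x) \<in> borel_measurable borel" by simp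
  have sqm: "(\<lambda>x::real. x + x^2) \<in> borel_measurable borel" by measurable
  have an0: "\<And>k::nat. 0 \<le> (\<lambda>_. 1::real) k" by simp
  have an1: "\<And>k::nat. 0 \<le> real k" by simp
  have an2: "\<And>k::nat. 0 \<le> (\<lambda>k. (real k)^2) k" by simp
  have I1_int: "integrable M (\<lambda>\<omega>. (\<lambda>z. 1 * (c1 * z * \<tau>) * 1) (zf (Y \<omega>)))"
    by (rule ib[of "\<lambda>z. 1 * (c1 * z * \<tau>) * 1"]) (intro continuous_intros)
  note I1_c = cr[of "\<lambda>_. 1" real "\<lambda>_. 1" "\<lambda>x. x" "\<lambda>_. 1", OF g1m grnn1 an1 an0 s1 s0 idm c1m I1_int]
  have I1: "integrable M (\<lambda>\<omega>. real (P1 \<omega>))" "(\<integral>\<omega>. real (P1 \<omega>) \<partial>M) = (\<integral>\<omega>. c1 * zf (Y \<omega>) * \<tau> \<partial>M)"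
    using I1_c by simp_all
  have I2_int: "integrable M (\<lambda>\<omega>. (\<lambda>z. 1 * 1 * (c2 * (xT - z) * \<tau>)) (zf (Y \<omega>)))"
    by (rule ib[of "\<lambda>z. 1 * 1 * (c2 * (xT - z) * \<tau>)"]) (intro continuous_intros)
  note I2_c = cr[of "\<lambda>_. 1" "\<lambda>_. 1" real "\<lambda>_. 1" "\<lambda>x. x", OF g1m grnn1 an0 an1 s0 s1 c1m idm I2_int]
  have I2: "integrable M (\<lambda>\<omega>. real (P2 \<omega>))" "(\<integral>\<omega>. real (P2 \<omega>) \<partial>M) = (\<integral>\<omega>. c2 * (xT - zf (Y \<omega>)) * \<tau> \<partial>M)"
    using I2_c by simp_all
  have I3_int: "integrable M (\<lambda>\<omega>. (\<lambda>z. 1 * (c1 * z * \<tau> + (c1 * z * \<tau>)^2) * 1) (zf (Y \<omega>)))"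
    by (rule ib[of "\<lambda>z. 1 * (c1 * z * \<tau> + (c1 * z * \<tau>)^2) * 1"]) (intro continuous_intros)
  note I3_c = cr[of "\<lambda>_. 1" "\<lambda>k. (real k)^2" "\<lambda>_. 1" "\<lambda>x. x + x^2" "\<lambda>_. 1", OF g1m grnn1 an2 an0 s2 s0 sqm c1m I3_int]
  have I3: "integrable M (\<lambda>\<omega>. (real (P1 \<omega>))^2)" "(\<integral>\<omega>. (real (P1 \<omega>))^2 \<partial>M) = (\<integral>\<omega>. c1 * zf (Y \<omega>) * \<tau> + (c1 * zf (Y \<omega>) * \<tau>)^2 \<partial>M)"
    using I3_c by simp_all
  have I4_int: "integrable M (\<lambda>\<omega>. (\<lambda>z. 1 * 1 * (c2 * (xT - z) * \<tau> + (c2 * (xT - z) * \<tau>)^2)) (zf (Y \<omega>)))"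
    by (rule ib[of "\<lambda>z. 1 * 1 * (c2 * (xT - z) * \<tau> + (c2 * (xT - z) * \<tau>)^2)"]) (intro continuous_intros)
  note I4_c = cr[of "\<lambda>_. 1" "\<lambda>_. 1" "\<lambda>k. (real k)^2" "\<lambda>_. 1" "\<lambda>x. x + x^2", OF g1m grnn1 an0 an2 s0 s2 c1m sqm I4_int]
  have I4: "integrable M (\<lambda>\<omega>. (real (P2 \<omega>))^2)" "(\<integral>\<omega>. (real (P2 \<omega>))^2 \<partial>M) = (\<integral>\<omega>. c2 * (xT - zf (Y \<omega>)) * \<tau> + (c2 * (xT - zf (Y \<omega>)) * \<tau>)^2 \<partial>M)"
    using I4_c by simp_all
  have I5_int: "integrable M (\<lambda>\<omega>. (\<lambda>z. 1 * (c1 * z * \<tau>) * (c2 * (xT - z) * \<tau>)) (zf (Y \<omega>)))"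
    by (rule ib[of "\<lambda>z. 1 * (c1 * z * \<tau>) * (c2 * (xT - z) * \<tau>)"]) (intro continuous_intros)
  note I5_c = cr[of "\<lambda>_. 1" real real "\<lambda>x. x" "\<lambda>x. x", OF g1m grnn1 an1 an1 s1 s1 idm idm I5_int]
  have I5: "integrable M (\<lambda>\<omega>. real (P1 \<omega>) * real (P2 \<omega>))" "(\<integral>\<omega>. real (P1 \<omega>) * real (P2 \<omega>) \<partial>M) = (\<integral>\<omega>. (c1 * zf (Y \<omega>) * \<tau>) * (c2 * (xT - zf (Y \<omega>)) * \<tau>) \<partial>M)"
    using I5_c by simp_all
  have I6_int: "integrable M (\<lambda>\<omega>. (\<lambda>z. z * (c1 * z * \<tau>) * 1) (zf (Y \<omega>)))"
    by (rule ib[of "\<lambda>z. z * (c1 * z * \<tau>) * 1"]) (intro continuous_intros)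
  note I6_c = cr[of zf real "\<lambda>_. 1" "\<lambda>x. x" "\<lambda>_. 1", OF zfm grnnz an1 an0 s1 s0 idm c1m I6_int]
  have I6: "integrable M (\<lambda>\<omega>. zf (Y \<omega>) * real (P1 \<omega>))" "(\<integral>\<omega>. zf (Y \<omega>) * real (P1 \<omega>) \<partial>M) = (\<integral>\<omega>. zf (Y \<omega>) * (c1 * zf (Y \<omega>) * \<tau>) \<partial>M)"
    using I6_c by simp_all
  have I7_int: "integrable M (\<lambda>\<omega>. (\<lambda>z. z * 1 * (c2 * (xT - z) * \<tau>)) (zf (Y \<omega>)))"
    by (rule ib[of "\<lambda>z. z * 1 * (c2 * (xT - z) * \<tau>)"]) (intro continuous_intros)
  note I7_c = cr[of zf "\<lambda>_. 1" real "\<lambda>_. 1" "\<lambda>x. x", OF zfm grnnz an0 an1 s0 s1 c1m idm I7_int]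
  have I7: "integrable M (\<lambda>\<omega>. zf (Y \<omega>) * real (P2 \<omega>))" "(\<integral>\<omega>. zf (Y \<omega>) * real (P2 \<omega>) \<partial>M) = (\<integral>\<omega>. zf (Y \<omega>) * (c2 * (xT - zf (Y \<omega>)) * \<tau>) \<partial>M)"
    using I7_c by simp_all
  have Ia: "integrable M (\<lambda>\<omega>. \<alpha>0 (zf (Y \<omega>)))" by (rule ib[OF \<alpha>0])
  have J1: "integrable M (\<lambda>\<omega>. c1 * zf (Y \<omega>) * \<tau>)"
    by (rule ib[of "\<lambda>z. c1 * z * \<tau>"]) (intro continuous_intros)
  have J2: "integrable M (\<lambda>\<omega>. c2 * (xT - zf (Y \<omega>)) * \<tau>)"
    by (rule ib[of "\<lambda>z. c2 * (xT - z) * \<tau>"]) (intro continuous_intros)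
  have J3: "integrable M (\<lambda>\<omega>. c1 * zf (Y \<omega>) * \<tau> + (c1 * zf (Y \<omega>) * \<tau>)^2)"
    by (rule ib[of "\<lambda>z. c1 * z * \<tau> + (c1 * z * \<tau>)^2"]) (intro continuous_intros)
  have J4: "integrable M (\<lambda>\<omega>. c2 * (xT - zf (Y \<omega>)) * \<tau> + (c2 * (xT - zf (Y \<omega>)) * \<tau>)^2)"
    by (rule ib[of "\<lambda>z. c2 * (xT - z) * \<tau> + (c2 * (xT - z) * \<tau>)^2"]) (intro continuous_intros)
  have J5: "integrable M (\<lambda>\<omega>. (c1 * zf (Y \<omega>) * \<tau>) * (c2 * (xT - zf (Y \<omega>)) * \<tau>))"
    by (rule ib[of "\<lambda>z. (c1 * z * \<tau>) * (c2 * (xT - z) * \<tau>)"]) (intro continuous_intros)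
  have J6: "integrable M (\<lambda>\<omega>. zf (Y \<omega>) * (c1 * zf (Y \<omega>) * \<tau>))"
    by (rule ib[of "\<lambda>z. z * (c1 * z * \<tau>)"]) (intro continuous_intros)
  have J7: "integrable M (\<lambda>\<omega>. zf (Y \<omega>) * (c2 * (xT - zf (Y \<omega>)) * \<tau>))"
    by (rule ib[of "\<lambda>z. z * (c2 * (xT - z) * \<tau>)"]) (intro continuous_intros)
  show intT: "integrable M T"
    unfolding T_def by (simp add: Ia I1(1) I2(1) I3(1) I4(1) I5(1) I6(1) I7(1))
  show intR: "integrable M (\<lambda>\<omega>. R (zf (Y \<omega>)))"
    proof (rule ib)
    show "continuous_on UNIV R" unfolding R_def
      by (intro continuous_intros continuous_on_compose2[OF \<alpha>0]) auto
  qed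
  have eT: "integral\<^sup>L M T = (\<integral>\<omega>. \<alpha>0 (zf (Y \<omega>)) \<partial>M) + u1 * (\<integral>\<omega>. real (P1 \<omega>) \<partial>M)
      + v1 * (\<integral>\<omega>. zf (Y \<omega>) * real (P1 \<omega>) \<partial>M) + u2 * (\<integral>\<omega>. real (P2 \<omega>) \<partial>M)
      + v2 * (\<integral>\<omega>. zf (Y \<omega>) * real (P2 \<omega>) \<partial>M) + b1 * (\<integral>\<omega>. (real (P1 \<omega>))^2 \<partial>M)
      + b2 * (\<integral>\<omega>. (real (P2 \<omega>))^2 \<partial>M) + b3 * (\<integral>\<omega>. real (P1 \<omega>) * real (P2 \<omega>) \<partial>M)"
    unfolding T_def by (simp add: Ia I1(1) I2(1) I3(1) I4(1) I5(1) I6(1) I7(1))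
  have eR: "(\<integral>\<omega>. R (zf (Y \<omega>)) \<partial>M) = (\<integral>\<omega>. \<alpha>0 (zf (Y \<omega>)) \<partial>M) + u1 * (\<integral>\<omega>. c1 * zf (Y \<omega>) * \<tau> \<partial>M)
      + v1 * (\<integral>\<omega>. zf (Y \<omega>) * (c1 * zf (Y \<omega>) * \<tau>) \<partial>M) + u2 * (\<integral>\<omega>. c2 * (xT - zf (Y \<omega>)) * \<tau> \<partial>M)
      + v2 * (\<integral>\<omega>. zf (Y \<omega>) * (c2 * (xT - zf (Y \<omega>)) * \<tau>) \<partial>M)
      + b1 * (\<integral>\<omega>. c1 * zf (Y \<omega>) * \<tau> + (c1 * zf (Y \<omega>) * \<tau>)^2 \<partial>M)
      + b2 * (\<integral>\<omega>. c2 * (xT - zf (Y \<omega>)) * \<tau> + (c2 * (xT - zf (Y \<omega>)) * \<tau>)^2 \<partial>M)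
      + b3 * (\<integral>\<omega>. (c1 * zf (Y \<omega>) * \<tau>) * (c2 * (xT - zf (Y \<omega>)) * \<tau>) \<partial>M)"
    unfolding R_def by (rule int_lin8[OF Ia J1 J6 J2 J7 J3 J4 J5])
  show "integral\<^sup>L M T = (\<integral>\<omega>. R (zf (Y \<omega>)) \<partial>M)"
    unfolding eT eR I1(2) I2(2) I3(2) I4(2) I5(2) I6(2) I7(2) ..
qed

theorem mainTheorem2:
  fixes M :: "'a measure"
    and c1 c2 xT \<tau> \<theta> \<eta>1 \<eta>2 :: real
    and Y Yhat Ytil :: "nat \<Rightarrow> 'a \<Rightarrow> real"
    and P1 P2 :: "nat \<Rightarrow> 'a \<Rightarrow> nat"
  defines "lam \<equiv> c1 + c2"
  defines "f \<equiv> (\<lambda>y. c2 * (xT - y) - c1 * y)"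
  defines "Q1 \<equiv> (1 - (1 - \<eta>1) * lam * (1 - \<theta>) * \<tau>) / (1 + \<eta>1 * lam * (1 - \<theta>) * \<tau>)"
  defines "Q2 \<equiv> (1 - (1 - \<eta>2) * lam * \<theta> * \<tau>) / (1 + \<eta>2 * lam * \<theta> * \<tau>)"
  assumes M: "prob_space M"
    and c1: "c1 > 0" and c2: "c2 > 0" and xT: "xT > 0" and tau: "\<tau> > 0"
    and den1: "1 + \<eta>1 * lam * (1 - \<theta>) * \<tau> \<noteq> 0"
    and den2: "1 + \<eta>2 * lam * \<theta> * \<tau> \<noteq> 0"
    and Q2nz: "Q2 \<noteq> 0"
    and Y_rv: "\<And>n. Y n \<in> borel_measurable M"
    and P1_rv: "\<And>n. P1 n \<in> measurable M (count_space UNIV)"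
    and P2_rv: "\<And>n. P2 n \<in> measurable M (count_space UNIV)"
    and Y0_sq: "integrable M (\<lambda>\<omega>. (Y 0 \<omega>)\<^sup>2)"
    and step1: "\<And>n \<omega>. \<omega> \<in> space M \<Longrightarrow>
       Yhat n \<omega> = Y n \<omega> + (1 - \<theta>) * \<tau> * ((1 - \<eta>1) * f (Y n \<omega>) + \<eta>1 * f (Yhat n \<omega>))"
    and step2: "\<And>n \<omega>. \<omega> \<in> space M \<Longrightarrow>
       Ytil n \<omega> = Yhat n \<omega> + real (P2 n \<omega>) - real (P1 n \<omega>) - \<tau> * f (Yhat n \<omega>)"
    and step3: "\<And>n \<omega>. \<omega> \<in> space M \<Longrightarrow>
       Y (Suc n) \<omega> = Ytil n \<omega> + \<theta> * \<tau> * ((1 - \<eta>2) * f (Ytil n \<omega>) + \<eta>2 * f (Y (Suc n) \<omega>))"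
    and cond_poisson: "\<And>n (A :: nat \<Rightarrow> real set) k1 k2. (\<And>i. A i \<in> sets borel) \<Longrightarrow>
       measure M {\<omega> \<in> space M. (\<forall>i\<le>n. Y i \<omega> \<in> A i) \<and> P1 n \<omega> = k1 \<and> P2 n \<omega> = k2}
       = (\<integral>\<omega>. indicator {\<omega> \<in> space M. \<forall>i\<le>n. Y i \<omega> \<in> A i} \<omega>
              * poisson_prob (c1 * Yhat n \<omega> * \<tau>) k1
              * poisson_prob (c2 * (xT - Yhat n \<omega>) * \<tau>) k2 \<partial>M)"
    and well_defined: "\<And>n. AE \<omega> in M. 0 \<le> c1 * Yhat n \<omega> * \<tau> \<and> 0 \<le> c2 * (xT - Yhat n \<omega>) * \<tau>"
    and stable: "\<bar>Q1 * Q2\<bar> < 1"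
  shows "(\<lambda>n. prob_space.expectation M (Y n)) \<longlonglongrightarrow> c2 / lam * xT
       \<and> (\<lambda>n. prob_space.variance M (Y n)) \<longlonglongrightarrow>
           2 * lam * \<tau> / (1 / Q2\<^sup>2 - Q1\<^sup>2) * (c1 * c2 / lam\<^sup>2 * xT)"
proof -
  interpret prob_space M by (rule M)
  have lam: "lam > 0" using c1 c2 by (simp add: lam_def)
  define m where "m = c2 / lam * xT"
  have mlam: "m * lam = c2 * xT" using lam by (simp add: m_def)
  have fv: "f y = c2 * xT - lam * y" for y by (simp add: f_def lam_def algebra_simps)
  define zf where "zf y = m + Q1 * (y - m)" for y
  have zfc: "continuous_on UNIV zf" unfolding zf_def by (intro continuous_intros)
  have Hyhat: "Yhat n \<omega> = zf (Y n \<omega>)" if "\<omega> \<in> space M" for n \<omega>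
  proof -
    define d1 where "d1 = 1 + \<eta>1 * lam * (1 - \<theta>) * \<tau>"
    have d1: "d1 \<noteq> 0" using den1 by (simp add: d1_def)
    have "Yhat n \<omega> * d1 = Y n \<omega> * (1 - (1 - \<eta>1) * lam * (1 - \<theta>) * \<tau>) + m * lam * (1 - \<theta>) * \<tau>"
      using step1[of \<omega> n, OF that] unfolding fv mlam d1_def by algebra
    then have "Yhat n \<omega> = (Y n \<omega> * (1 - (1 - \<eta>1) * lam * (1 - \<theta>) * \<tau>) + m * lam * (1 - \<theta>) * \<tau>) / d1"
      using d1 by (simp add: field_simps)
    also have "\<dots> = zf (Y n \<omega>)"
      using d1 unfolding zf_def Q1_def d1_def[symmetric] by (simp add: field_simps) (simp add: d1_def algebra_simps)
    finally show ?thesis .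
  qed
  define D where "D n \<omega> = real (P2 n \<omega>) - real (P1 n \<omega>) - \<tau> * (c2 * xT - lam * zf (Y n \<omega>))" for n \<omega>
  have HY: "Y (Suc n) \<omega> = m + Q2 * (zf (Y n \<omega>) - m + D n \<omega>)" if "\<omega> \<in> space M" for n \<omega>
  proof -
    define d2 where "d2 = 1 + \<eta>2 * lam * \<theta> * \<tau>"
    have d2: "d2 \<noteq> 0" using den2 by (simp add: d2_def)
    have yt: "Ytil n \<omega> = zf (Y n \<omega>) + D n \<omega>"
      using step2[of \<omega> n, OF that] Hyhat[OF that] by (simp add: D_def fv)
    have "Y (Suc n) \<omega> * d2 = Ytil n \<omega> * (1 - (1 - \<eta>2) * lam * \<theta> * \<tau>) + m * lam * \<theta> * \<tau>"
      using step3[of \<omega> n, OF that] unfolding fv mlam d2_def by algebra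
    then have "Y (Suc n) \<omega> = (Ytil n \<omega> * (1 - (1 - \<eta>2) * lam * \<theta> * \<tau>) + m * lam * \<theta> * \<tau>) / d2"
      using d2 by (simp add: field_simps)
    also have "\<dots> = m + Q2 * (Ytil n \<omega> - m)"
      using d2 unfolding Q2_def d2_def[symmetric] by (simp add: field_simps) (simp add: d2_def algebra_simps)
    finally show ?thesis by (simp add: yt)
  qed
  have Ym[measurable]: "Y n \<in> borel_measurable M" for n by (rule Y_rv)
  have P1m[measurable]: "P1 n \<in> measurable M (count_space UNIV)" for n by (rule P1_rv)
  have P2m[measurable]: "P2 n \<in> measurable M (count_space UNIV)" for n by (rule P2_rv)
  have zfm[measurable]: "zf \<in> borel_measurable borel" by (rule borel_measurable_continuous_onI[OF zfc])
  have nn: "AE \<omega> in M. 0 \<le> c1 * zf (Y n \<omega>) * \<tau> \<and> 0 \<le> c2 * (xT - zf (Y n \<omega>)) * \<tau>" for n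
    using well_defined[of n] AE_space by eventually_elim (simp add: Hyhat)
  have Zb: "AE \<omega> in M. 0 \<le> zf (Y n \<omega>) \<and> zf (Y n \<omega>) \<le> xT" for n
    using nn[of n] by eventually_elim (use c1 c2 tau in \<open>auto simp: zero_le_mult_iff\<close>)
  have condn: "measure M {\<omega> \<in> space M. Y n \<omega> \<in> B \<and> P1 n \<omega> = k1 \<and> P2 n \<omega> = k2}
      = (\<integral>\<omega>. indicator {\<omega> \<in> space M. Y n \<omega> \<in> B} \<omega> * poisson_prob (c1 * zf (Y n \<omega>) * \<tau>) k1
            * poisson_prob (c2 * (xT - zf (Y n \<omega>)) * \<tau>) k2 \<partial>M)" if B: "B \<in> sets borel" for n B k1 k2
  proof -
    define A where "A i = (if i = n then B else UNIV)" for i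
    have A: "A i \<in> sets borel" for i using B by (simp add: A_def)
    have e1: "{\<omega> \<in> space M. (\<forall>i\<le>n. Y i \<omega> \<in> A i) \<and> P1 n \<omega> = k1 \<and> P2 n \<omega> = k2}
        = {\<omega> \<in> space M. Y n \<omega> \<in> B \<and> P1 n \<omega> = k1 \<and> P2 n \<omega> = k2}" by (auto simp: A_def)
    have e2: "{\<omega> \<in> space M. \<forall>i\<le>n. Y i \<omega> \<in> A i} = {\<omega> \<in> space M. Y n \<omega> \<in> B}" by (auto simp: A_def)
    show ?thesis using cond_poisson[of A n k1 k2, OF A] unfolding e1 e2
      by (simp add: Hyhat cong: Bochner_Integration.integral_cong)
  qed
  have a0c: "continuous_on UNIV (\<lambda>z::real. - \<tau> * (c2 * xT - lam * z))" by (intro continuous_intros)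
  have DA: "integrable M (D n)" "integral\<^sup>L M (D n) = 0" for n
    using combo[where M=M and Y="Y n" and ?P1.0="P1 n" and ?P2.0="P2 n" and zf=zf
      and ?\<alpha>0.0="\<lambda>z. - \<tau> * (c2 * xT - lam * z)" and ?c1.0=c1 and ?c2.0=c2 and xT=xT and \<tau>=\<tau>
      and ?u1.0="-1" and ?v1.0=0 and ?u2.0=1 and ?v2.0=0 and ?b1.0=0 and ?b2.0=0 and ?b3.0=0,
      OF M Ym P1m P2m zfc a0c c1 c2 tau nn condn] by (simp_all add: D_def[abs_def] algebra_simps lam_def)
  have a1c: "continuous_on UNIV (\<lambda>z::real. - (z - m) * \<tau> * (c2 * xT - lam * z))" by (intro continuous_intros)
  have DB: "integrable M (\<lambda>\<omega>. (zf (Y n \<omega>) - m) * D n \<omega>)" "(\<integral>\<omega>. (zf (Y n \<omega>) - m) * D n \<omega> \<partial>M) = 0" for n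
    using combo[where M=M and Y="Y n" and ?P1.0="P1 n" and ?P2.0="P2 n" and zf=zf
      and ?\<alpha>0.0="\<lambda>z. - (z - m) * \<tau> * (c2 * xT - lam * z)" and ?c1.0=c1 and ?c2.0=c2 and xT=xT and \<tau>=\<tau>
      and ?u1.0="m" and ?v1.0="-1" and ?u2.0="-m" and ?v2.0=1 and ?b1.0=0 and ?b2.0=0 and ?b3.0=0,
      OF M Ym P1m P2m zfc a1c c1 c2 tau nn condn] by (simp_all add: D_def algebra_simps lam_def)
  have a2c: "continuous_on UNIV (\<lambda>z::real. \<tau>^2 * (c2 * xT - lam * z)^2)" by (intro continuous_intros)
  have DC: "integrable M (\<lambda>\<omega>. (D n \<omega>)^2)"
     "(\<integral>\<omega>. (D n \<omega>)^2 \<partial>M) = (\<integral>\<omega>. c1 * zf (Y n \<omega>) * \<tau> + c2 * (xT - zf (Y n \<omega>)) * \<tau> \<partial>M)" for n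
    using combo[where M=M and Y="Y n" and ?P1.0="P1 n" and ?P2.0="P2 n" and zf=zf
      and ?\<alpha>0.0="\<lambda>z. \<tau>^2 * (c2 * xT - lam * z)^2" and ?c1.0=c1 and ?c2.0=c2 and xT=xT and \<tau>=\<tau>
      and ?u1.0="2 * \<tau> * c2 * xT" and ?v1.0="-2 * \<tau> * lam" and ?u2.0="- 2 * \<tau> * c2 * xT" and ?v2.0="2 * \<tau> * lam"
      and ?b1.0=1 and ?b2.0=1 and ?b3.0="-2",
      OF M Ym P1m P2m zfc a2c c1 c2 tau nn condn] by (simp_all add: D_def algebra_simps lam_def power2_eq_square)
  define EZ where "EZ n = expectation (\<lambda>\<omega>. zf (Y n \<omega>))" for n
  define S where "S n = expectation (\<lambda>\<omega>. (zf (Y n \<omega>) - m)^2)" for n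
  define d where "d n = \<tau> * (c1 * EZ n + c2 * (xT - EZ n))" for n
  have iZ: "integrable M (\<lambda>\<omega>. zf (Y n \<omega>))" for n
    using int_bdd_fun[where Z="\<lambda>\<omega>. zf (Y n \<omega>)" and h="\<lambda>z. z" and lo=0 and hi=xT, OF M _ Zb] by simp
  have iZ2: "integrable M (\<lambda>\<omega>. (zf (Y n \<omega>) - m)^2)" for n
    using int_bdd_fun[where Z="\<lambda>\<omega>. zf (Y n \<omega>)" and h="\<lambda>z. (z - m)^2" and lo=0 and hi=xT, OF M _ Zb]
    by (simp add: continuous_intros)
  have dn: "(\<integral>\<omega>. c1 * zf (Y n \<omega>) * \<tau> + c2 * (xT - zf (Y n \<omega>)) * \<tau> \<partial>M) = d n" for n
  proof -
    have "(\<integral>\<omega>. c1 * zf (Y n \<omega>) * \<tau> + c2 * (xT - zf (Y n \<omega>)) * \<tau> \<partial>M)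
        = (\<integral>\<omega>. \<tau> * (c2 * xT) + (\<tau> * (c1 - c2)) * zf (Y n \<omega>) \<partial>M)"
      by (rule Bochner_Integration.integral_cong) (auto simp: algebra_simps)
    also have "\<dots> = \<tau> * (c2 * xT) + (\<tau> * (c1 - c2)) * EZ n"
      using iZ[of n] by (simp add: EZ_def prob_space)
    finally show ?thesis by (simp add: d_def algebra_simps)
  qed
  have stepE: "integrable M (Y (Suc n)) \<and> expectation (Y (Suc n)) = m + Q2 * (EZ n - m)" for n
  proof -
    have i: "integrable M (\<lambda>\<omega>. m + Q2 * (zf (Y n \<omega>) - m + D n \<omega>))"
      using iZ[of n] DA(1)[of n] by simp
    have "integrable M (Y (Suc n)) \<longleftrightarrow> integrable M (\<lambda>\<omega>. m + Q2 * (zf (Y n \<omega>) - m + D n \<omega>))"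
      by (rule Bochner_Integration.integrable_cong) (auto simp: HY)
    moreover have "expectation (Y (Suc n)) = expectation (\<lambda>\<omega>. m + Q2 * (zf (Y n \<omega>) - m + D n \<omega>))"
      by (rule Bochner_Integration.integral_cong) (auto simp: HY)
    moreover have "expectation (\<lambda>\<omega>. m + Q2 * (zf (Y n \<omega>) - m + D n \<omega>)) = m + Q2 * (EZ n - m)"
      using iZ[of n] DA[of n] by (simp add: EZ_def prob_space)
    ultimately show ?thesis using i by simp
  qed
  have stepV: "integrable M (\<lambda>\<omega>. (Y (Suc n) \<omega> - m)^2) \<and> expectation (\<lambda>\<omega>. (Y (Suc n) \<omega> - m)^2) = Q2^2 * (S n + d n)" for n
  proof -
    let ?g = "\<lambda>\<omega>. Q2^2 * ((zf (Y n \<omega>) - m)^2 + 2 * ((zf (Y n \<omega>) - m) * D n \<omega>) + (D n \<omega>)^2)"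
    have eq: "(Y (Suc n) \<omega> - m)^2 = ?g \<omega>" if "\<omega> \<in> space M" for \<omega>
      by (simp add: HY[of \<omega> n, OF that] power2_eq_square algebra_simps)
    have i: "integrable M ?g" using iZ2[of n] DB(1)[of n] DC(1)[of n] by simp
    have "integrable M (\<lambda>\<omega>. (Y (Suc n) \<omega> - m)^2) \<longleftrightarrow> integrable M ?g"
      by (rule Bochner_Integration.integrable_cong) (auto simp: eq)
    moreover have "expectation (\<lambda>\<omega>. (Y (Suc n) \<omega> - m)^2) = expectation ?g"
      by (rule Bochner_Integration.integral_cong) (auto simp: eq)
    moreover have "expectation ?g = Q2^2 * (S n + d n)"
      using iZ2[of n] DB[of n] DC[of n] dn[of n] by (simp add: S_def prob_space)
    ultimately show ?thesis using i by simp
  qed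
  have recZ: "EZ (Suc n) - m = (Q1 * Q2) * (EZ n - m)" for n
  proof -
    have "EZ (Suc n) = expectation (\<lambda>\<omega>. m + Q1 * (Y (Suc n) \<omega> - m))" by (simp add: EZ_def zf_def)
    also have "\<dots> = m + Q1 * (expectation (Y (Suc n)) - m)" using stepE[of n] by (simp add: prob_space)
    finally show ?thesis using stepE[of n] by (simp add: algebra_simps)
  qed
  have recS: "S (Suc n) = (Q1 * Q2)^2 * S n + (Q1 * Q2)^2 * d n" for n
  proof -
    have "S (Suc n) = expectation (\<lambda>\<omega>. Q1^2 * (Y (Suc n) \<omega> - m)^2)"
      by (simp add: S_def zf_def power_mult_distrib)
    also have "\<dots> = Q1^2 * (Q2^2 * (S n + d n))" using stepV[of n] by simp
    finally show ?thesis by (simp add: power_mult_distrib algebra_simps)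
  qed
  have var: "variance (Y (Suc n)) = Q2^2 * (S n + d n) - (Q2 * (EZ n - m))^2" for n
  proof -
    define a where "a = Q2 * (EZ n - m)"
    have e: "expectation (Y (Suc n)) = m + a" using stepE[of n] by (simp add: a_def)
    have "(\<lambda>\<omega>. (Y (Suc n) \<omega> - expectation (Y (Suc n)))^2)
        = (\<lambda>\<omega>. (Y (Suc n) \<omega> - m)^2 - 2 * a * Y (Suc n) \<omega> + (2 * a * m + a^2))"
      by (rule ext) (simp add: e power2_eq_square algebra_simps)
    then have "variance (Y (Suc n)) = expectation (\<lambda>\<omega>. (Y (Suc n) \<omega> - m)^2) - 2 * a * expectation (Y (Suc n)) + (2 * a * m + a^2)"
      using stepE[of n] stepV[of n] by (simp add: prob_space)
    also have "\<dots> = Q2^2 * (S n + d n) - a^2" using stepV[of n] e by (simp add: power2_eq_square algebra_simps)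
    finally show ?thesis by (simp add: a_def)
  qed
  define r where "r = Q1 * Q2"
  have r: "\<bar>r\<bar> < 1" using stable by (simp add: r_def)
  have r2: "\<bar>r^2\<bar> < 1" using r by (simp add: abs_less_iff power2_eq_square) (smt (verit) mult_less_cancel_right2 mult_minus_left)
  have u: "(\<lambda>n. EZ n - m) \<longlonglongrightarrow> 0"
    by (rule lin_rec_zero[OF r, where e="\<lambda>_. 0"]) (simp_all add: recZ r_def)
  have EZl: "EZ \<longlonglongrightarrow> m" using u by (simp add: LIM_zero_iff)
  define dl where "dl = \<tau> * (c1 * m + c2 * (xT - m))"
  have dlim: "d \<longlonglongrightarrow> dl" unfolding d_def[abs_def] dl_def by (intro tendsto_intros EZl)
  have Slim: "S \<longlonglongrightarrow> r^2 * dl / (1 - r^2)"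
    by (rule lin_rec[OF r2]) (simp_all add: recS r_def tendsto_mult_left dlim, intro tendsto_intros dlim)
  have E1: "(\<lambda>n. expectation (Y (Suc n))) \<longlonglongrightarrow> m + Q2 * 0"
    using stepE by (simp only:) (intro tendsto_intros u)
  have V1: "(\<lambda>n. variance (Y (Suc n))) \<longlonglongrightarrow> Q2^2 * (r^2 * dl / (1 - r^2) + dl) - (Q2 * 0)^2"
    unfolding var by (intro tendsto_intros u Slim dlim)
  have dl_eq: "dl = 2 * \<tau> * c1 * c2 * xT / lam"
  proof -
    have "dl * lam = \<tau> * (c1 * (m * lam) + c2 * (xT * lam - m * lam))" by (simp add: dl_def algebra_simps)
    also have "\<dots> = 2 * \<tau> * c1 * c2 * xT" by (simp only: mlam) (simp add: lam_def algebra_simps)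
    finally show ?thesis using lam by (simp add: field_simps)
  qed
  have r21: "1 - r^2 \<noteq> 0" using r2 by auto
  have fin: "Q2^2 * (r^2 * dl / (1 - r^2) + dl) - (Q2 * 0)^2 = 2 * lam * \<tau> / (1 / Q2\<^sup>2 - Q1\<^sup>2) * (c1 * c2 / lam\<^sup>2 * xT)"
  proof -
    have q: "1 / Q2\<^sup>2 - Q1\<^sup>2 = (1 - r^2) / Q2^2" using Q2nz by (simp add: r_def field_simps power_mult_distrib)
    show ?thesis unfolding q dl_eq using Q2nz r21 lam by (simp add: field_simps power2_eq_square)
  qed
  show ?thesis
  proof
    show "(\<lambda>n. expectation (Y n)) \<longlonglongrightarrow> c2 / lam * xT"
      using LIMSEQ_imp_Suc[of "\<lambda>n. expectation (Y n)"] E1 by (simp add: m_def)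
    show "(\<lambda>n. variance (Y n)) \<longlonglongrightarrow> 2 * lam * \<tau> / (1 / Q2\<^sup>2 - Q1\<^sup>2) * (c1 * c2 / lam\<^sup>2 * xT)"
      using LIMSEQ_imp_Suc[of "\<lambda>n. variance (Y n)"] V1 unfolding fin by simp
  qed
qed

end
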